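(* Let $B$ be a board with $c=3$ colors. Then $B$ has no perfect layout if any of the following holds: (a) some sink is two cells away from three sides of the boundary and is adjacent to another sink; (b) some sink is two cells away from two perpendicular (incident) sides of the boundary and is adjacent to the two other sinks; (c) some sink is two cells away from two opposite sides of the boundary and is adjacent to the two other sinks; (d) some sink is two cells away from three sides of the boundary and, in the remaining direction, exactly one blank cell separates it from another sink which is adjacent to the third sink.
   Context: A board is an $m\times n$ grid of unit cells in which exactly $c$ cells are sinks, one of each of $c$ colors, and all other cells are empty. A layout places, in some of the empty cells, arrows, each having one of the $c$ colors and one of the four cardinal directions. A packet of color $i$ may enter the grid through any unit edge of the outer boundary of the grid, into the adjacent cell, moving perpendicular to that edge into the grid; it moves one cell at a time in its current direction, and whenever it enters a cell containing an arrow of color $i$ its direction becomes that arrow's direction (arrows of other colors are ignored). The packet succeeds if it enters the sink of color $i$; it fails if it enters a sink of another color, leaves the grid, or travels forever without reaching a sink. A perfect layout is a layout in which every packet of every color entering through every boundary edge succeeds. A sink is "two cells away" from a side of the boundary if, in the straight line from the sink to that side (along its row or column), there are exactly two cells between the sink and that side, both empty. Two sinks are adjacent if their cells share an edge. *)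

theory Defs
  imports Main
begin

type_synonym cell = "int \<times> int"   (* (row, column); rows grow downward *)

datatype dir = North | East | South | West

fun delta :: "dir \<Rightarrow> int \<times> int" where
  "delta North = (-1, 0)"
| "delta South = (1, 0)"
| "delta East = (0, 1)"
| "delta West = (0, -1)"

fun opp :: "dir \<Rightarrow> dir" where
  "opp North = South" | "opp South = North" | "opp East = West" | "opp West = East"

definition shift :: "cell \<Rightarrow> dir \<Rightarrow> int \<Rightarrow> cell" where
  "shift p d k = (fst p + k * fst (delta d), snd p + k * snd (delta d))"

definition in_grid :: "nat \<Rightarrow> nat \<Rightarrow> cell \<Rightarrow> bool" where
  "in_grid m n p \<longleftrightarrow> 0 \<le> fst p \<and> fst p < int m \<and> 0 \<le> snd p \<and> snd p < int n"

text \<open>A board: an m x n grid with c sinks, sink i being the sink of colour i (i < c).\<close>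
definition board :: "nat \<Rightarrow> nat \<Rightarrow> nat \<Rightarrow> (nat \<Rightarrow> cell) \<Rightarrow> bool" where
  "board m n c sink \<longleftrightarrow> inj_on sink {..<c} \<and> (\<forall>i<c. in_grid m n (sink i))"

definition is_sink :: "nat \<Rightarrow> (nat \<Rightarrow> cell) \<Rightarrow> cell \<Rightarrow> bool" where
  "is_sink c sink p \<longleftrightarrow> p \<in> sink ` {..<c}"

definition empty_cell :: "nat \<Rightarrow> nat \<Rightarrow> nat \<Rightarrow> (nat \<Rightarrow> cell) \<Rightarrow> cell \<Rightarrow> bool" where
  "empty_cell m n c sink p \<longleftrightarrow> in_grid m n p \<and> \<not> is_sink c sink p"

definition layout :: "nat \<Rightarrow> nat \<Rightarrow> nat \<Rightarrow> (nat \<Rightarrow> cell) \<Rightarrow> (cell \<Rightarrow> (nat \<times> dir) option) \<Rightarrow> bool" where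
  "layout m n c sink L \<longleftrightarrow>
     (\<forall>p a. L p = Some a \<longrightarrow> empty_cell m n c sink p \<and> fst a < c)"

definition turn :: "(cell \<Rightarrow> (nat \<times> dir) option) \<Rightarrow> nat \<Rightarrow> cell \<Rightarrow> dir \<Rightarrow> dir" where
  "turn L i p d = (case L p of Some (j, d') \<Rightarrow> if j = i then d' else d | None \<Rightarrow> d)"

text \<open>Trajectory of a packet of colour i entering cell q0 moving in direction d0:
  the k-th cell entered and the direction after entering it.\<close>
fun traj :: "(cell \<Rightarrow> (nat \<times> dir) option) \<Rightarrow> nat \<Rightarrow> cell \<Rightarrow> dir \<Rightarrow> nat \<Rightarrow> cell \<times> dir" where
  "traj L i q0 d0 0 = (q0, turn L i q0 d0)"
| "traj L i q0 d0 (Suc k) =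
     (let (p, d) = traj L i q0 d0 k; q = shift p d 1 in (q, turn L i q d))"

definition succeeds :: "nat \<Rightarrow> nat \<Rightarrow> nat \<Rightarrow> (nat \<Rightarrow> cell) \<Rightarrow> (cell \<Rightarrow> (nat \<times> dir) option)
    \<Rightarrow> nat \<Rightarrow> cell \<Rightarrow> dir \<Rightarrow> bool" where
  "succeeds m n c sink L i q0 d0 \<longleftrightarrow>
     (\<exists>k. fst (traj L i q0 d0 k) = sink i \<and>
          (\<forall>j<k. empty_cell m n c sink (fst (traj L i q0 d0 j))))"

text \<open>Entry through a boundary edge: the packet enters grid cell q moving in direction d,
  coming from outside the grid (one entry per unit boundary edge).\<close>
definition boundary_entry :: "nat \<Rightarrow> nat \<Rightarrow> cell \<Rightarrow> dir \<Rightarrow> bool" where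
  "boundary_entry m n q d \<longleftrightarrow> in_grid m n q \<and> \<not> in_grid m n (shift q d (-1))"

definition perfect_layout :: "nat \<Rightarrow> nat \<Rightarrow> nat \<Rightarrow> (nat \<Rightarrow> cell) \<Rightarrow> (cell \<Rightarrow> (nat \<times> dir) option) \<Rightarrow> bool" where
  "perfect_layout m n c sink L \<longleftrightarrow> layout m n c sink L \<and>
     (\<forall>i<c. \<forall>q d. boundary_entry m n q d \<longrightarrow> succeeds m n c sink L i q d)"

definition two_away :: "nat \<Rightarrow> nat \<Rightarrow> nat \<Rightarrow> (nat \<Rightarrow> cell) \<Rightarrow> nat \<Rightarrow> dir \<Rightarrow> bool" where
  "two_away m n c sink s d \<longleftrightarrow>
     empty_cell m n c sink (shift (sink s) d 1) \<and> empty_cell m n c sink (shift (sink s) d 2) \<and>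
     \<not> in_grid m n (shift (sink s) d 3)"

definition adjacent :: "cell \<Rightarrow> cell \<Rightarrow> bool" where
  "adjacent p q \<longleftrightarrow> \<bar>fst p - fst q\<bar> + \<bar>snd p - snd q\<bar> = 1"

end

theory Submission
  imports Defs
begin

definition noarr :: "(cell \<Rightarrow> (nat \<times> dir) option) \<Rightarrow> nat \<Rightarrow> cell \<Rightarrow> bool" where
  "noarr L i p \<longleftrightarrow> (\<forall>x. L p \<noteq> Some (i, x))"

fun rot :: "dir \<Rightarrow> dir" where
  "rot North = East" | "rot East = South" | "rot South = West" | "rot West = North"

lemma turn_noarr: "noarr L i p \<Longrightarrow> turn L i p d = d"
  by (auto simp: turn_def noarr_def split: option.split)

lemma turn_arr: "L p = Some (i, x) \<Longrightarrow> turn L i p d = x"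
  by (simp add: turn_def)

lemma traj_Suc_fst: "fst (traj L i q d (Suc k)) = shift (fst (traj L i q d k)) (snd (traj L i q d k)) 1"
  by (simp add: split_beta Let_def)

lemma traj_Suc_snd: "snd (traj L i q d (Suc k)) = turn L i (fst (traj L i q d (Suc k))) (snd (traj L i q d k))"
  by (simp add: split_beta Let_def)

lemma traj_0_fst: "fst (traj L i q d 0) = q" by simp

declare traj.simps(2)[simp del]

lemma g1: "shift (shift x d 1) (opp d) (-1) = shift x d 2" by (cases d) (auto simp: shift_def)
lemma g2: "shift (shift x d 2) (opp d) (-1) = shift x d 3" by (cases d) (auto simp: shift_def)
lemma g3: "shift (shift x d 2) (opp d) 1 = shift x d 1" by (cases d) (auto simp: shift_def)
lemma g4: "shift (shift x d 1) (opp d) 1 = x" by (cases d) (auto simp: shift_def)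
lemma g5: "shift (shift p v 1) v (-1) = p" by (cases v) (auto simp: shift_def)
lemma g6: "shift p v 1 = x \<Longrightarrow> p = shift x (opp v) 1" by (cases v) (auto simp: shift_def)
lemma opp_opp[simp]: "opp (opp d) = d" by (cases d) auto
lemma opp_inj: "opp a = opp b \<Longrightarrow> a = b" by (cases a; cases b) auto
lemma adj_shift: "adjacent p q \<Longrightarrow> \<exists>d. q = shift p d 1"
proof -
  assume "adjacent p q"
  then have h: "\<bar>fst p - fst q\<bar> + \<bar>snd p - snd q\<bar> = 1" by (simp add: adjacent_def)
  have "(fst q = fst p - 1 \<and> snd q = snd p) \<or> (fst q = fst p + 1 \<and> snd q = snd p) \<or>
        (fst q = fst p \<and> snd q = snd p + 1) \<or> (fst q = fst p \<and> snd q = snd p - 1)"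
    using h by arith
  then show ?thesis
    apply (elim disjE)
       apply (rule exI[of _ North]) apply (simp add: shift_def prod_eq_iff)
      apply (rule exI[of _ South]) apply (simp add: shift_def prod_eq_iff)
     apply (rule exI[of _ East]) apply (simp add: shift_def prod_eq_iff)
    apply (rule exI[of _ West]) apply (simp add: shift_def prod_eq_iff)
    done
qed


lemma shift_comm: "shift (shift p a k) b l = shift (shift p b l) a k"
  by (simp add: shift_def)
lemma shift_add: "shift (shift p a k) a l = shift p a (k+l)"
  by (simp add: shift_def algebra_simps)
lemma shift_opp: "shift p (opp a) k = shift p a (-k)"
  by (cases a) (auto simp: shift_def)
lemma comb_in: "b \<noteq> a \<Longrightarrow> b \<noteq> opp a \<Longrightarrow> in_grid m n (shift p a k) \<Longrightarrow> in_grid m n (shift p b l)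
   \<Longrightarrow> in_grid m n (shift (shift p a k) b l)"
  by (cases a; cases b) (auto simp: in_grid_def shift_def)
lemma comb_out: "b \<noteq> a \<Longrightarrow> b \<noteq> opp a \<Longrightarrow> in_grid m n p \<Longrightarrow> \<not> in_grid m n (shift p b l)
   \<Longrightarrow> \<not> in_grid m n (shift (shift p a k) b l)"
  by (cases a; cases b) (auto simp: in_grid_def shift_def)
lemma all_dir: "(\<forall>x. P x) \<longleftrightarrow> P North \<and> P East \<and> P South \<and> P West"
  by (metis dir.exhaust)
lemma ex_dir: "(\<exists>x. P x) \<longleftrightarrow> P North \<or> P East \<or> P South \<or> P West"
  by (metis dir.exhaust)
lemma four_dirs: "(a::dir) \<noteq> b \<Longrightarrow> c \<noteq> d \<Longrightarrow> c \<noteq> a \<Longrightarrow> c \<noteq> b \<Longrightarrow> d \<noteq> a \<Longrightarrow> d \<noteq> b \<Longrightarrow>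
   (x::dir) = a \<or> x = b \<or> x = c \<or> x = d"
  by (cases a; cases b; cases c; cases d; cases x; simp)

locale pl =
  fixes m n :: nat and sink :: "nat \<Rightarrow> cell" and L
  assumes B: "board m n 3 sink" and P: "perfect_layout m n 3 sink L"
begin

abbreviation "E p \<equiv> empty_cell m n 3 sink p"

lemma inj3: "i<3 \<Longrightarrow> j<3 \<Longrightarrow> sink i = sink j \<Longrightarrow> i = j"
  using B by (auto simp: board_def inj_on_def)
lemma sink_ne: "i<3 \<Longrightarrow> \<not> E (sink i)"
  by (simp add: empty_cell_def is_sink_def)
lemma sink_grid: "i<3 \<Longrightarrow> in_grid m n (sink i)"
  using B by (simp add: board_def)
lemma succ: "i<3 \<Longrightarrow> boundary_entry m n q d \<Longrightarrow>
   \<exists>k. fst (traj L i q d k) = sink i \<and> (\<forall>j<k. E (fst (traj L i q d j)))"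
  using P unfolding perfect_layout_def succeeds_def by blast
lemma empty3: "s<3 \<Longrightarrow> t<3 \<Longrightarrow> u<3 \<Longrightarrow> s\<noteq>t \<Longrightarrow> s\<noteq>u \<Longrightarrow> t\<noteq>u \<Longrightarrow> in_grid m n p \<Longrightarrow>
   p \<noteq> sink s \<Longrightarrow> p \<noteq> sink t \<Longrightarrow> p \<noteq> sink u \<Longrightarrow> E p"
proof -
  assume a: "s<3" "t<3" "u<3" "s\<noteq>t" "s\<noteq>u" "t\<noteq>u" "in_grid m n p" "p \<noteq> sink s" "p \<noteq> sink t" "p \<noteq> sink u"
  have "\<And>i. i<3 \<Longrightarrow> i = s \<or> i = t \<or> i = u" using a(1-6) by arith
  then show ?thesis using a by (auto simp: empty_cell_def is_sink_def)
qed

lemma backS: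
  assumes "noarr L i (fst (traj L i q0 d0 (Suc j)))"
  shows "snd (traj L i q0 d0 j) = snd (traj L i q0 d0 (Suc j)) \<and>
         fst (traj L i q0 d0 j) = shift (fst (traj L i q0 d0 (Suc j))) (snd (traj L i q0 d0 (Suc j))) (-1)"
proof -
  have 1: "snd (traj L i q0 d0 (Suc j)) = snd (traj L i q0 d0 j)"
    using assms by (simp only: traj_Suc_snd turn_noarr)
  show ?thesis using 1 by (simp add: traj_Suc_fst g5)
qed

lemma back0:
  assumes "noarr L i q0" shows "traj L i q0 d0 0 = (q0, d0)"
  using assms by (simp add: turn_noarr)

lemma arm_has:
  assumes s3: "s<3" and i3: "i<3" and ns: "i\<noteq>s" and tw: "two_away m n 3 sink s d"
  shows "(\<exists>x. L (shift (sink s) d 1) = Some (i,x)) \<or> (\<exists>x. L (shift (sink s) d 2) = Some (i,x))"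
proof (rule ccontr)
  let ?a1 = "shift (sink s) d 1" and ?a2 = "shift (sink s) d 2"
  assume "\<not> ?thesis"
  hence n1: "noarr L i ?a1" and n2: "noarr L i ?a2" by (auto simp: noarr_def)
  have e1: "E ?a1" and e2: "E ?a2" and o3: "\<not> in_grid m n (shift (sink s) d 3)"
    using tw by (auto simp: two_away_def)
  have be: "boundary_entry m n ?a2 (opp d)"
    using e2 o3 g2[of "sink s" d] by (auto simp: boundary_entry_def empty_cell_def)
  obtain k where k: "fst (traj L i ?a2 (opp d) k) = sink i" "\<forall>j<k. E (fst (traj L i ?a2 (opp d) j))"
    using succ[OF i3 be] by blast
  have t0: "traj L i ?a2 (opp d) 0 = (?a2, opp d)" using back0[OF n2] .
  have t1f: "fst (traj L i ?a2 (opp d) (Suc 0)) = ?a1" using t0 by (simp add: traj_Suc_fst g3)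
  have t1s: "snd (traj L i ?a2 (opp d) (Suc 0)) = opp d" using t0 t1f n1
    by (simp add: traj_Suc_snd turn_noarr)
  have t2f: "fst (traj L i ?a2 (opp d) (Suc (Suc 0))) = sink s" using t1f t1s
    by (simp add: traj_Suc_fst g4)
  show False
  proof (cases "k \<le> Suc (Suc 0)")
    case True
    then consider "k = 0" | "k = Suc 0" | "k = Suc (Suc 0)" by linarith
    then show ?thesis
    proof cases
      case 1 then show ?thesis using k t0 e2 sink_ne[OF i3] by auto
    next
      case 2 then show ?thesis using k t1f e1 sink_ne[OF i3] by auto
    next
      case 3 then show ?thesis using k t2f inj3[OF s3 i3] ns by auto
    qed
  next
    case False
    then have "Suc (Suc 0) < k" by simp
    then have "E (fst (traj L i ?a2 (opp d) (Suc (Suc 0))))" using k(2) by blast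
    then show ?thesis using t2f sink_ne[OF s3] by simp
  qed
qed

lemma arm_noarr:
  assumes s3: "s<3" and tw: "two_away m n 3 sink s d"
  shows "noarr L s (shift (sink s) d 1) \<and> noarr L s (shift (sink s) d 2)"
proof -
  let ?a1 = "shift (sink s) d 1" and ?a2 = "shift (sink s) d 2"
  define i1 where "i1 = (s+1) mod 3"
  define i2 where "i2 = (s+2) mod 3"
  have i: "i1<3" "i2<3" "i1\<noteq>s" "i2\<noteq>s" "i1\<noteq>i2" using s3 unfolding i1_def i2_def by arith+
  note h1 = arm_has[OF s3 i(1) i(3) tw] and h2 = arm_has[OF s3 i(2) i(4) tw]
  show ?thesis unfolding noarr_def
  proof (intro conjI allI notI)
    fix x assume a: "L ?a1 = Some (s, x)"
    then show False using h1 h2 i by auto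
  next
    fix x assume a: "L ?a2 = Some (s, x)"
    then show False using h1 h2 i by auto
  qed
qed

lemma arm_entry:
  assumes tw: "two_away m n 3 sink i dd"
    and n1: "noarr L i (shift (sink i) dd 1)" and n2: "noarr L i (shift (sink i) dd 2)"
    and be: "boundary_entry m n q0 d0"
    and f: "fst (traj L i q0 d0 j) = shift (sink i) dd 1" and sn: "snd (traj L i q0 d0 j) = opp dd"
    and em: "\<forall>j'\<le>j. E (fst (traj L i q0 d0 j'))"
  shows "q0 = shift (sink i) dd 2 \<and> d0 = opp dd"
proof -
  have e2: "E (shift (sink i) dd 2)" and o3: "\<not> in_grid m n (shift (sink i) dd 3)"
    using tw by (auto simp: two_away_def)
  show ?thesis
  proof (cases j)
    case 0
    then have "q0 = shift (sink i) dd 1" using f by simp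
    then have "traj L i q0 d0 0 = (q0, d0)" using back0 n1 by simp
    then have "d0 = opp dd" using sn 0 by simp
    then show ?thesis using be e2 g1[of "sink i" dd] \<open>q0 = _\<close>
      by (auto simp: boundary_entry_def empty_cell_def)
  next
    case (Suc j2)
    have b: "snd (traj L i q0 d0 j2) = opp dd \<and> fst (traj L i q0 d0 j2) = shift (sink i) dd 2"
      using backS[of i q0 d0 j2] n1 f sn Suc g1 by simp
    show ?thesis
    proof (cases j2)
      case 0
      then have q: "q0 = shift (sink i) dd 2" using b by simp
      then have "traj L i q0 d0 0 = (q0, d0)" using back0 n2 by simp
      then show ?thesis using b 0 q by simp
    next
      case (Suc j3)
      have "fst (traj L i q0 d0 j3) = shift (sink i) dd 3"
        using backS[of i q0 d0 j3] n2 b Suc g2 by simp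
      moreover have "E (fst (traj L i q0 d0 j3))" using em Suc \<open>j = Suc j2\<close> by simp
      ultimately show ?thesis using o3 by (simp add: empty_cell_def)
    qed
  qed
qed

lemma arrive:
  assumes i3: "i<3" and be: "boundary_entry m n q0 d0" and ne: "q0 \<noteq> sink i"
  shows "\<exists>dd j. fst (traj L i q0 d0 j) = shift (sink i) dd 1 \<and> snd (traj L i q0 d0 j) = opp dd \<and>
     (\<forall>j'\<le>j. E (fst (traj L i q0 d0 j'))) \<and>
     (two_away m n 3 sink i dd \<longrightarrow> q0 = shift (sink i) dd 2 \<and> d0 = opp dd)"
proof -
  obtain k where k: "fst (traj L i q0 d0 k) = sink i" "\<forall>j<k. E (fst (traj L i q0 d0 j))"
    using succ[OF i3 be] by blast
  obtain j where kj: "k = Suc j" using k(1) ne by (cases k) auto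
  let ?v = "snd (traj L i q0 d0 j)"
  have "shift (fst (traj L i q0 d0 j)) ?v 1 = sink i" using k(1) kj by (simp add: traj_Suc_fst)
  then have f: "fst (traj L i q0 d0 j) = shift (sink i) (opp ?v) 1" by (rule g6)
  have em: "\<forall>j'\<le>j. E (fst (traj L i q0 d0 j'))" using k(2) kj by auto
  show ?thesis
  proof (intro exI conjI impI)
    show "fst (traj L i q0 d0 j) = shift (sink i) (opp ?v) 1" by (rule f)
    show "?v = opp (opp ?v)" by simp
    show "\<forall>j'\<le>j. E (fst (traj L i q0 d0 j'))" by (rule em)
    assume tw: "two_away m n 3 sink i (opp ?v)"
    have nn: "noarr L i (shift (sink i) (opp ?v) 1)" "noarr L i (shift (sink i) (opp ?v) 2)"
      using arm_noarr[OF i3 tw] by auto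
    have sv: "?v = opp (opp ?v)" by simp
    have "q0 = shift (sink i) (opp ?v) 2 \<and> d0 = opp (opp ?v)"
      by (rule arm_entry[OF tw nn be f sv em])
    then show "q0 = shift (sink i) (opp ?v) 2" "d0 = opp (opp ?v)" by auto
  qed
qed

lemma one_away:
  assumes u3: "u<3" and i3: "i<3" and iu: "i\<noteq>u" and be: "boundary_entry m n w v"
    and sh: "shift w v 1 = sink u" and ew: "E w"
  shows "\<exists>x. L w = Some (i,x)"
proof (rule ccontr)
  assume "\<not> ?thesis"
  hence nw: "noarr L i w" by (auto simp: noarr_def)
  obtain k where k: "fst (traj L i w v k) = sink i" "\<forall>j<k. E (fst (traj L i w v j))"
    using succ[OF i3 be] by blast
  have t0: "traj L i w v 0 = (w, v)" using back0[OF nw] .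
  have t1: "fst (traj L i w v (Suc 0)) = sink u" using t0 sh by (simp add: traj_Suc_fst)
  show False
  proof (cases k)
    case 0 then show ?thesis using k t0 ew sink_ne[OF i3] by auto
  next
    case (Suc k')
    show ?thesis
    proof (cases k')
      case 0 then show ?thesis using k t1 Suc inj3[OF u3 i3] iu by auto
    next
      case (Suc k'')
      then show ?thesis using k(2) \<open>k = Suc k'\<close> t1 sink_ne[OF u3] by auto
    qed
  qed
qed

lemma corner_entry:
  assumes s3: "s<3" and twa: "two_away m n 3 sink s a" and gb: "in_grid m n (shift (sink s) b 1)"
    and ba: "b \<noteq> a" "b \<noteq> opp a"
  shows "\<exists>dd j. fst (traj L s (shift (shift (sink s) a 2) b 1) (opp a) j) = shift (sink s) dd 1 \<and>
     snd (traj L s (shift (shift (sink s) a 2) b 1) (opp a) j) = opp dd \<and>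
     (\<forall>j'\<le>j. E (fst (traj L s (shift (shift (sink s) a 2) b 1) (opp a) j'))) \<and>
     \<not> two_away m n 3 sink s dd"
proof -
  let ?q = "shift (shift (sink s) a 2) b 1"
  have g2: "in_grid m n (shift (sink s) a 2)" and o3: "\<not> in_grid m n (shift (sink s) a 3)"
    using twa by (auto simp: two_away_def empty_cell_def)
  have "in_grid m n ?q" by (rule comb_in[OF ba g2 gb])
  moreover have "shift ?q (opp a) (-1) = shift (shift (sink s) b 1) a 3"
    by (cases a) (auto simp: shift_def)
  moreover have "\<not> in_grid m n (shift (shift (sink s) b 1) a 3)"
  proof -
    have "a \<noteq> b" "a \<noteq> opp b" using ba by (cases a; cases b; auto)+
    then show ?thesis using comb_out[where a=b and b=a and p="sink s" and k=1 and l=3] sink_grid[OF s3] o3 by simp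
  qed
  ultimately have be: "boundary_entry m n ?q (opp a)" by (simp add: boundary_entry_def)
  have ne: "?q \<noteq> sink s" using ba by (cases a; cases b) (auto simp: shift_def prod_eq_iff)
  obtain dd j where h: "fst (traj L s ?q (opp a) j) = shift (sink s) dd 1" "snd (traj L s ?q (opp a) j) = opp dd"
     "\<forall>j'\<le>j. E (fst (traj L s ?q (opp a) j'))"
     "two_away m n 3 sink s dd \<longrightarrow> ?q = shift (sink s) dd 2 \<and> opp a = opp dd"
    using arrive[OF s3 be ne] by blast
  have "\<not> two_away m n 3 sink s dd"
  proof
    assume "two_away m n 3 sink s dd"
    then have "?q = shift (sink s) dd 2" "dd = a" using h(4) opp_inj by auto
    then show False using ba by (cases a; cases b) (auto simp: shift_def prod_eq_iff)
  qed
  then show ?thesis using h by blast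
qed

lemma two_colors: "(s::nat)<3 \<Longrightarrow> \<exists>t u. t<3 \<and> u<3 \<and> t\<noteq>s \<and> u\<noteq>s \<and> t\<noteq>u"
  by (rule exI[of _ "(s+1) mod 3"], rule exI[of _ "(s+2) mod 3"]) arith

lemma caseA:
  assumes s3: "s<3" and dis: "distinct [d1,d2,d3]" and tw: "two_away m n 3 sink s d1"
    "two_away m n 3 sink s d2" "two_away m n 3 sink s d3"
    and t3: "t<3" "t\<noteq>s" and adj: "adjacent (sink s) (sink t)"
  shows False
proof -
  have d123: "d1 \<noteq> d2" "d3 \<noteq> d1" "d3 \<noteq> d2" using dis by auto
  have "\<exists>d4. d4 \<noteq> d1 \<and> d4 \<noteq> d2 \<and> d4 \<noteq> d3"
    unfolding ex_dir by (cases d1; cases d2; cases d3; simp)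
  then obtain d4 where d4: "d4 \<noteq> d1" "d4 \<noteq> d2" "d4 \<noteq> d3" by blast
  have W: "\<And>x. x \<noteq> d4 \<Longrightarrow> two_away m n 3 sink s x"
  proof -
    fix x assume "x \<noteq> d4"
    then have "x = d1 \<or> x = d2 \<or> x = d3" using four_dirs[of d1 d2 d3 d4 x] d123 d4 by auto
    then show "two_away m n 3 sink s x" using tw by auto
  qed
  have r1: "rot d4 \<noteq> d4" and r2: "opp d4 \<noteq> d4" and r3: "opp d4 \<noteq> rot d4" and r4: "opp d4 \<noteq> opp (rot d4)"
    by (cases d4; simp)+
  have gb: "in_grid m n (shift (sink s) (opp d4) 1)" using W[OF r2] by (simp add: two_away_def empty_cell_def)
  obtain dd j where h: "fst (traj L s (shift (shift (sink s) (rot d4) 2) (opp d4) 1) (opp (rot d4)) j) = shift (sink s) dd 1"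
     "\<forall>j'\<le>j. E (fst (traj L s (shift (shift (sink s) (rot d4) 2) (opp d4) 1) (opp (rot d4)) j'))"
     "\<not> two_away m n 3 sink s dd"
    using corner_entry[OF s3 W[OF r1] gb r3 r4] by blast
  have Edd: "E (shift (sink s) dd 1)" using h(1,2) by (metis order_refl)
  have dd: "dd = d4" using W h(3) by blast
  obtain dt where dt: "sink t = shift (sink s) dt 1" using adj_shift[OF adj] by blast
  have "dt = d4"
  proof (rule ccontr)
    assume "dt \<noteq> d4"
    then have "E (shift (sink s) dt 1)" using W by (simp add: two_away_def)
    then show False using dt sink_ne[OF t3(1)] by simp
  qed
  then show False using Edd dd dt sink_ne[OF t3(1)] by simp
qed

lemma caseBC:
  assumes s3: "s<3" and d12: "d1 \<noteq> d2" and tw: "two_away m n 3 sink s d1" "two_away m n 3 sink s d2"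
    and adj: "\<forall>t<3. t \<noteq> s \<longrightarrow> adjacent (sink s) (sink t)"
    and ab: "\<exists>a b. two_away m n 3 sink s a \<and> in_grid m n (shift (sink s) b 1) \<and> b \<noteq> a \<and> b \<noteq> opp a"
  shows False
proof -
  obtain t u where tu: "t<3" "u<3" "t\<noteq>s" "u\<noteq>s" "t\<noteq>u" using two_colors[OF s3] by blast
  obtain dt where dt: "sink t = shift (sink s) dt 1" using adj_shift adj tu by blast
  obtain du where du: "sink u = shift (sink s) du 1" using adj_shift adj tu by blast
  have nt: "\<And>x. two_away m n 3 sink s x \<Longrightarrow> shift (sink s) x 1 \<noteq> sink t \<and> shift (sink s) x 1 \<noteq> sink u"
    using sink_ne tu by (auto simp: two_away_def)
  have dtu: "dt \<noteq> du" using dt du inj3 tu by auto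
  have nd: "dt \<noteq> d1" "dt \<noteq> d2" "du \<noteq> d1" "du \<noteq> d2" using nt tw dt du by auto
  obtain a b where abh: "two_away m n 3 sink s a" "in_grid m n (shift (sink s) b 1)" "b \<noteq> a" "b \<noteq> opp a"
    using ab by blast
  obtain dd j where h: "fst (traj L s (shift (shift (sink s) a 2) b 1) (opp a) j) = shift (sink s) dd 1"
     "\<forall>j'\<le>j. E (fst (traj L s (shift (shift (sink s) a 2) b 1) (opp a) j'))"
     "\<not> two_away m n 3 sink s dd"
    using corner_entry[OF s3 abh] by blast
  have Edd: "E (shift (sink s) dd 1)" using h(1,2) by (metis order_refl)
  have "dd \<noteq> d1" "dd \<noteq> d2" using h(3) tw by auto
  then have "dd = dt \<or> dd = du" using four_dirs[OF d12 dtu nd(1,2) nd(3,4), of dd] by auto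
  then show False using Edd sink_ne[OF tu(1)] sink_ne[OF tu(2)] by (auto simp flip: dt du)
qed

lemma caseD:
  assumes s3: "s<3" and t3: "t<3" and u3: "u<3" and dst: "distinct [s,t,u]"
    and dis: "distinct [d1,d2,d3,d4]" and tw: "two_away m n 3 sink s d1"
    "two_away m n 3 sink s d2" "two_away m n 3 sink s d3"
    and ec: "E (shift (sink s) d4 1)" and st: "shift (sink s) d4 2 = sink t"
    and adj: "adjacent (sink t) (sink u)"
  shows False
proof -
  have dst': "s\<noteq>t" "s\<noteq>u" "t\<noteq>u" using dst by auto
  have W: "\<And>x. x \<noteq> d4 \<Longrightarrow> two_away m n 3 sink s x"
  proof -
    fix x assume "x \<noteq> d4"
    then have "x = d1 \<or> x = d2 \<or> x = d3" using dis by (cases d1; cases d2; cases d3; cases d4; cases x; simp)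
    then show "two_away m n 3 sink s x" using tw by auto
  qed
  let ?c = "shift (sink s) d4 1"
  have r1: "rot d4 \<noteq> d4" and r2: "opp d4 \<noteq> d4" and r3: "opp d4 \<noteq> rot d4" and r4: "opp d4 \<noteq> opp (rot d4)"
    and r5: "opp (rot d4) \<noteq> d4" and r6: "rot d4 \<noteq> opp d4"
    by (cases d4; simp)+
  have gb: "in_grid m n (shift (sink s) (opp d4) 1)" using W[OF r2] by (simp add: two_away_def empty_cell_def)
  let ?q = "shift (shift (sink s) (rot d4) 2) (opp d4) 1"
  obtain dd j where h: "fst (traj L s ?q (opp (rot d4)) j) = shift (sink s) dd 1"
     "snd (traj L s ?q (opp (rot d4)) j) = opp dd"
     "\<forall>j'\<le>j. E (fst (traj L s ?q (opp (rot d4)) j'))"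
     "\<not> two_away m n 3 sink s dd"
    using corner_entry[OF s3 W[OF r1] gb r3 r4] by blast
  have dd: "dd = d4" using W h(4) by blast
  have Lc: "\<not> noarr L s ?c"
  proof
    assume na: "noarr L s ?c"
    show False
    proof (cases j)
      case 0
      then have "?q = ?c" using h(1) dd by simp
      then show False by (cases d4) (auto simp: shift_def prod_eq_iff)
    next
      case (Suc j')
      have "fst (traj L s ?q (opp (rot d4)) j') = shift ?c (opp d4) (-1)"
        using backS[of s ?q "opp (rot d4)" j'] na h(1,2) dd Suc by simp
      also have "\<dots> = sink t" using st g1 by simp
      finally have "fst (traj L s ?q (opp (rot d4)) j') = sink t" .
      moreover have "E (fst (traj L s ?q (opp (rot d4)) j'))" using h(3) Suc by simp
      ultimately show False using sink_ne[OF t3] by simp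
    qed
  qed
  have nt: "noarr L t ?c" using Lc dst' unfolding noarr_def by auto
  obtain du where du: "sink u = shift (sink t) du 1" using adj_shift[OF adj] by blast
  have tg: "in_grid m n (sink t)" by (rule sink_grid[OF t3])
  consider "du = opp d4" | "du = d4" | "du \<noteq> d4 \<and> du \<noteq> opp d4" by blast
  then show False
  proof cases
    case 1
    then have "sink u = ?c" using du st[symmetric] g3 by simp
    then show False using ec sink_ne[OF u3] by simp
  next
    case 2
    have Tw: "two_away m n 3 sink t e" if e: "e \<noteq> d4" "e \<noteq> opp d4" for e
    proof -
      have twe: "two_away m n 3 sink s e" using W e by simp
      have gs: "in_grid m n (shift (sink s) e 1)" "in_grid m n (shift (sink s) e 2)"
        "\<not> in_grid m n (shift (sink s) e 3)"
        using twe by (auto simp: two_away_def empty_cell_def)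
      have g: "in_grid m n (shift (sink t) e k)" if "in_grid m n (shift (sink s) e k)" for k
        using comb_in[OF e, of m n "sink s" 2 k] that st tg by simp
      have go: "\<not> in_grid m n (shift (sink t) e 3)"
        using comb_out[OF e, of m n "sink s" 3 2] gs(3) st sink_grid[OF s3] by simp
      have ne: "shift (sink t) e k \<noteq> sink s \<and> shift (sink t) e k \<noteq> sink t \<and> shift (sink t) e k \<noteq> sink u"
        if "k = 1 \<or> k = 2" for k
        using e that unfolding du 2 st[symmetric]
        by (cases d4; cases e) (auto simp: shift_def prod_eq_iff)
      have n1: "shift (sink t) e 1 \<noteq> sink s" "shift (sink t) e 1 \<noteq> sink t" "shift (sink t) e 1 \<noteq> sink u"
        using ne[of 1] by simp_all
      have n2: "shift (sink t) e 2 \<noteq> sink s" "shift (sink t) e 2 \<noteq> sink t" "shift (sink t) e 2 \<noteq> sink u"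
        using ne[of 2] by simp_all
      have "E (shift (sink t) e 1)" by (rule empty3[OF s3 t3 u3 dst' g[OF gs(1)] n1])
      moreover have "E (shift (sink t) e 2)" by (rule empty3[OF s3 t3 u3 dst' g[OF gs(2)] n2])
      ultimately show ?thesis unfolding two_away_def using go by simp
    qed
    let ?e = "rot d4"
    have twe: "two_away m n 3 sink s ?e" using W r1 by simp
    let ?q2 = "shift (sink s) ?e 2"
    have be: "boundary_entry m n ?q2 (opp ?e)"
      using twe g2[of "sink s" ?e] by (auto simp: two_away_def empty_cell_def boundary_entry_def)
    have qne: "?q2 \<noteq> sink t" unfolding st[symmetric] by (cases d4) (auto simp: shift_def prod_eq_iff)
    obtain dd2 j2 where h2: "fst (traj L t ?q2 (opp ?e) j2) = shift (sink t) dd2 1"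
      "snd (traj L t ?q2 (opp ?e) j2) = opp dd2"
      "\<forall>j'\<le>j2. E (fst (traj L t ?q2 (opp ?e) j'))"
      "two_away m n 3 sink t dd2 \<longrightarrow> ?q2 = shift (sink t) dd2 2 \<and> opp ?e = opp dd2"
      using arrive[OF t3 be qne] by blast
    have Ed2: "E (shift (sink t) dd2 1)" using h2(1,3) by (metis order_refl)
    show False
    proof (cases "two_away m n 3 sink t dd2")
      case True
      then have "?q2 = shift (sink t) dd2 2" "dd2 = ?e" using h2(4) opp_inj by auto
      then show False unfolding st[symmetric] by (cases d4) (auto simp: shift_def prod_eq_iff)
    next
      case False
      then have "dd2 = d4 \<or> dd2 = opp d4" using Tw by blast
      then show False
      proof
        assume "dd2 = d4"
        then show False using Ed2 du 2 sink_ne[OF u3] by simp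
      next
        assume d2o: "dd2 = opp d4"
        have fc: "fst (traj L t ?q2 (opp ?e) j2) = ?c" using h2(1) d2o st[symmetric] g3 by simp
        show False
        proof (cases j2)
          case 0
          then have "?q2 = ?c" using fc by simp
          then show False by (cases d4) (auto simp: shift_def prod_eq_iff)
        next
          case (Suc j')
          have "fst (traj L t ?q2 (opp ?e) j') = shift ?c d4 (-1)"
            using backS[of t ?q2 "opp ?e" j'] nt fc h2(2) d2o Suc by simp
          also have "\<dots> = sink s" by (rule g5)
          finally have "fst (traj L t ?q2 (opp ?e) j') = sink s" .
          moreover have "E (fst (traj L t ?q2 (opp ?e) j'))" using h2(3) Suc by simp
          ultimately show False using sink_ne[OF s3] by simp
        qed
      qed
    qed
  next
    case 3
    then have e: "du \<noteq> d4" "du \<noteq> opp d4" by auto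
    have twu: "two_away m n 3 sink s du" using W e by simp
    let ?w = "shift (sink u) du 1"
    have w: "?w = shift (shift (sink s) d4 2) du 2" unfolding du st[symmetric] shift_add by simp
    have gs: "in_grid m n (shift (sink s) du 2)" "\<not> in_grid m n (shift (sink s) du 3)"
      using twu by (auto simp: two_away_def empty_cell_def)
    have gw: "in_grid m n ?w" unfolding w
      using comb_in[OF e, of m n "sink s" 2 2] gs st tg by simp
    have "shift ?w (opp du) (-1) = shift (shift (sink s) d4 2) du 3"
      unfolding w by (cases du) (auto simp: shift_def)
    moreover have "\<not> in_grid m n (shift (shift (sink s) d4 2) du 3)"
      using comb_out[OF e, of m n "sink s" 3 2] gs(2) sink_grid[OF s3] by simp
    ultimately have be: "boundary_entry m n ?w (opp du)" using gw by (simp add: boundary_entry_def)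
    have sh: "shift ?w (opp du) 1 = sink u" using g4 by simp
    have ne: "?w \<noteq> sink s \<and> ?w \<noteq> sink t \<and> ?w \<noteq> sink u"
      unfolding w unfolding du st[symmetric] using e
      by (cases d4; cases du) (auto simp: shift_def prod_eq_iff)
    have Ew: "E ?w" using empty3[OF s3 t3 u3 dst' gw] ne by simp
    obtain x1 where x1: "L ?w = Some (s, x1)" using one_away[OF u3 s3 dst'(2) be sh Ew] by blast
    obtain x2 where x2: "L ?w = Some (t, x2)" using one_away[OF u3 t3 dst'(3) be sh Ew] by blast
    show False using x1 x2 dst' by simp
  qed
qed


end

theorem mainTheorem10:
  fixes m n :: nat and sink :: "nat \<Rightarrow> cell"
  assumes B: "board m n 3 sink"
  assumes cond:
    "(\<exists>s<3. (\<exists>d1 d2 d3. distinct [d1, d2, d3] \<and> two_away m n 3 sink s d1 \<and>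
                two_away m n 3 sink s d2 \<and> two_away m n 3 sink s d3) \<and>
            (\<exists>t<3. t \<noteq> s \<and> adjacent (sink s) (sink t)))
   \<or> (\<exists>s<3. (\<exists>d1 d2. d2 \<noteq> d1 \<and> d2 \<noteq> opp d1 \<and> two_away m n 3 sink s d1 \<and>
                two_away m n 3 sink s d2) \<and>
            (\<forall>t<3. t \<noteq> s \<longrightarrow> adjacent (sink s) (sink t)))
   \<or> (\<exists>s<3. (\<exists>d. two_away m n 3 sink s d \<and> two_away m n 3 sink s (opp d)) \<and>
            (\<forall>t<3. t \<noteq> s \<longrightarrow> adjacent (sink s) (sink t)))
   \<or> (\<exists>s<3. \<exists>t<3. \<exists>u<3. distinct [s, t, u] \<and>
        (\<exists>d1 d2 d3 d4. distinct [d1, d2, d3, d4] \<and> two_away m n 3 sink s d1 \<and>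
            two_away m n 3 sink s d2 \<and> two_away m n 3 sink s d3 \<and>
            empty_cell m n 3 sink (shift (sink s) d4 1) \<and> shift (sink s) d4 2 = sink t) \<and>
        adjacent (sink t) (sink u))"
  shows "\<not> (\<exists>L. perfect_layout m n 3 sink L)"
proof
  assume "\<exists>L. perfect_layout m n 3 sink L"
  then obtain L where P: "perfect_layout m n 3 sink L" by blast
  interpret pl m n sink L using B P by (simp add: pl_def)
  from cond show False
  proof (elim disjE)
    assume "\<exists>s<3. (\<exists>d1 d2 d3. distinct [d1, d2, d3] \<and> two_away m n 3 sink s d1 \<and>
                two_away m n 3 sink s d2 \<and> two_away m n 3 sink s d3) \<and>
            (\<exists>t<3. t \<noteq> s \<and> adjacent (sink s) (sink t))"
    then obtain s d1 d2 d3 t where "s<3" "distinct [d1, d2, d3]" "two_away m n 3 sink s d1"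
      "two_away m n 3 sink s d2" "two_away m n 3 sink s d3" "t<3" "t \<noteq> s" "adjacent (sink s) (sink t)"
      by blast
    then show False using caseA by blast
  next
    assume "\<exists>s<3. (\<exists>d1 d2. d2 \<noteq> d1 \<and> d2 \<noteq> opp d1 \<and> two_away m n 3 sink s d1 \<and>
                two_away m n 3 sink s d2) \<and>
            (\<forall>t<3. t \<noteq> s \<longrightarrow> adjacent (sink s) (sink t))"
    then obtain s d1 d2 where h: "s<3" "d2 \<noteq> d1" "d2 \<noteq> opp d1" "two_away m n 3 sink s d1"
      "two_away m n 3 sink s d2" "\<forall>t<3. t \<noteq> s \<longrightarrow> adjacent (sink s) (sink t)"
      by blast
    have ab: "\<exists>a b. two_away m n 3 sink s a \<and> in_grid m n (shift (sink s) b 1) \<and> b \<noteq> a \<and> b \<noteq> opp a"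
      using h by (auto simp: two_away_def empty_cell_def)
    show False using caseBC[OF h(1) _ h(4,5) h(6) ab] h(2) by auto
  next
    assume "\<exists>s<3. (\<exists>d. two_away m n 3 sink s d \<and> two_away m n 3 sink s (opp d)) \<and>
            (\<forall>t<3. t \<noteq> s \<longrightarrow> adjacent (sink s) (sink t))"
    then obtain s d where h: "s<3" "two_away m n 3 sink s d" "two_away m n 3 sink s (opp d)"
      "\<forall>t<3. t \<noteq> s \<longrightarrow> adjacent (sink s) (sink t)"
      by blast
    obtain t u where tu: "t<3" "u<3" "t\<noteq>s" "u\<noteq>s" "t\<noteq>u" using two_colors[OF h(1)] by blast
    obtain dt where dt: "sink t = shift (sink s) dt 1" using adj_shift h(4) tu by blast
    have nd: "dt \<noteq> d" "dt \<noteq> opp d"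
      using h(2,3) dt sink_ne[OF tu(1)] by (auto simp: two_away_def)
    have ab: "\<exists>a b. two_away m n 3 sink s a \<and> in_grid m n (shift (sink s) b 1) \<and> b \<noteq> a \<and> b \<noteq> opp a"
      using h(2) nd sink_grid[OF tu(1)] dt by auto
    have "d \<noteq> opp d" by (cases d) auto
    then show False using caseBC[OF h(1) _ h(2,3) h(4) ab] by auto
  next
    assume "\<exists>s<3. \<exists>t<3. \<exists>u<3. distinct [s, t, u] \<and>
        (\<exists>d1 d2 d3 d4. distinct [d1, d2, d3, d4] \<and> two_away m n 3 sink s d1 \<and>
            two_away m n 3 sink s d2 \<and> two_away m n 3 sink s d3 \<and>
            empty_cell m n 3 sink (shift (sink s) d4 1) \<and> shift (sink s) d4 2 = sink t) \<and>
        adjacent (sink t) (sink u)"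
    then obtain s t u d1 d2 d3 d4 where "s<3" "t<3" "u<3" "distinct [s, t, u]"
      "distinct [d1, d2, d3, d4]" "two_away m n 3 sink s d1"
      "two_away m n 3 sink s d2" "two_away m n 3 sink s d3"
      "empty_cell m n 3 sink (shift (sink s) d4 1)" "shift (sink s) d4 2 = sink t"
      "adjacent (sink t) (sink u)"
      by blast
    then show False using caseD by blast
  qed
qed

end
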